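(* There exist two languages $L_1,L_2\subseteq\mathbb{N}$ and an enumeration $x_{1:\infty}$ that is, for each $K\in\{L_1,L_2\}$, an enumeration of $K$ with $o(1)$-noise and without omissions, such that for every $\rho>0$ no element-based generator can, with target $K$ an arbitrary member of the collection $\{L_1,L_2\}$, generate from $K$ in the limit on $x_{1:\infty}$ and achieve element-based upper density at least $\rho$ in $K$.
   Context: The universe is $U=\mathbb{N}$ with its natural order; a language is an infinite subset of $U$. For $A,B\subseteq\mathbb{N}$ with $B=\{b_1<b_2<\cdots\}$, $\mu_{\rm up}(A,B)=\limsup_n\frac1n|A\cap\{b_1,\dots,b_n\}|$. An enumeration of $L$ with $o(1)$-noise and without omissions is a sequence of distinct elements in which every element of $L$ appears and $\frac1n|\{t\le n:x_t\notin L\}|\to0$. An element-based generator outputs at step $n$, from $x_1,\dots,x_n$ (and knowledge of the collection, not of $K$), an element $w_n\notin\{x_1,\dots,x_n,w_1,\dots,w_{n-1}\}$; it generates in the limit from $K$ if $w_n\in K$ for all sufficiently large $n$, and achieves element-based upper density $\rho$ if $\mu_{\rm up}(\{w_1,w_2,\dots\},K)\ge\rho$. *)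

theory Defs
  imports "HOL-Analysis.Analysis" "HOL-Library.Infinite_Set"
begin

text \<open>Sequences are 0-indexed: x 0, x 1, ... correspond to x_1, x_2, ... of the paper.\<close>

definition is_language :: "nat set \<Rightarrow> bool" where
  "is_language L \<longleftrightarrow> infinite L"

definition noisy_enumeration :: "(nat \<Rightarrow> nat) \<Rightarrow> nat set \<Rightarrow> bool" where
  "noisy_enumeration x L \<longleftrightarrow>
     inj x \<and> L \<subseteq> range x \<and>
     ((\<lambda>n. real (card {t. t < n \<and> x t \<notin> L}) / real n) \<longlonglongrightarrow> 0)"

text \<open>Upper density mu_up(A,B) = limsup_n |A \<inter> {b_1,...,b_n}| / n, where b_1 < b_2 < ...
  enumerates B in increasing order (enumerate B (i-1) = b_i).\<close>
definition upper_density :: "nat set \<Rightarrow> nat set \<Rightarrow> ereal" where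
  "upper_density A B =
     limsup (\<lambda>n. ereal (real (card (A \<inter> enumerate B ` {..<n})) / real n))"

definition gen_output :: "(nat list \<Rightarrow> nat) \<Rightarrow> (nat \<Rightarrow> nat) \<Rightarrow> nat \<Rightarrow> nat" where
  "gen_output G x n = G (map x [0..<Suc n])"

definition valid_generator :: "(nat list \<Rightarrow> nat) \<Rightarrow> (nat \<Rightarrow> nat) \<Rightarrow> bool" where
  "valid_generator G x \<longleftrightarrow>
     (\<forall>n. gen_output G x n \<notin> x ` {..n} \<and> gen_output G x n \<notin> gen_output G x ` {..<n})"

definition generates_in_limit :: "(nat list \<Rightarrow> nat) \<Rightarrow> (nat \<Rightarrow> nat) \<Rightarrow> nat set \<Rightarrow> bool" where
  "generates_in_limit G x K \<longleftrightarrow> (\<forall>\<^sub>F n in sequentially. gen_output G x n \<in> K)"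

definition achieves_upper_density ::
    "(nat list \<Rightarrow> nat) \<Rightarrow> (nat \<Rightarrow> nat) \<Rightarrow> nat set \<Rightarrow> real \<Rightarrow> bool" where
  "achieves_upper_density G x K \<rho> \<longleftrightarrow> upper_density (range (gen_output G x)) K \<ge> ereal \<rho>"

end

theory Submission
  imports Defs "HOL-Real_Asymp.Real_Asymp"
begin

definition Psq :: "nat \<Rightarrow> bool" where
  "Psq t \<longleftrightarrow> (\<exists>k. t = k*k \<and> k mod 3 \<noteq> 2)"

definition xs :: "nat \<Rightarrow> nat" where
  "xs t = (if Psq t then (THE k. t = k*k) else 3*t*t+2)"

definition CC :: "nat set" where "CC = {m\<in>range xs. m mod 3 = 2}"
definition LL1 :: "nat set" where "LL1 = {m. m mod 3 = 0} \<union> CC"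
definition LL2 :: "nat set" where "LL2 = {m. m mod 3 = 1} \<union> CC"

lemma sq_inj: "(a::nat)*a = b*b \<Longrightarrow> a = b"
  by (metis power2_eq_square power2_eq_iff_nonneg zero_le)

lemma the_sq: "(THE k. m*m = (k::nat)*k) = m"
  by (rule the_equality) (auto dest: sq_inj)

lemma xs_sq: "Psq t \<Longrightarrow> t = k*k \<Longrightarrow> xs t = k"
  unfolding xs_def by (simp add: the_sq)

lemma xs_sq2: "k mod 3 \<noteq> 2 \<Longrightarrow> xs (k*k) = k"
  using xs_sq Psq_def by blast

lemma xs_mod: "Psq t \<Longrightarrow> xs t mod 3 \<noteq> 2"
  using xs_sq Psq_def by metis

lemma xs_nsq: "\<not> Psq t \<Longrightarrow> xs t = 3*t*t+2"
  unfolding xs_def by simp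

lemma card_sq: "real (card {k::nat. k*k < n}) \<le> sqrt n + 1"
proof -
  have "{k::nat. k*k < n} \<subseteq> {..< nat (ceiling (sqrt n))}"
  proof
    fix k assume "k \<in> {k::nat. k*k < n}"
    then have "real k * real k < real n" by (metis mem_Collect_eq of_nat_less_iff of_nat_mult)
    then have "real k < sqrt n" by (metis of_nat_0_le_iff real_less_rsqrt power2_eq_square)
    then have "int k < ceiling (sqrt n)" by (simp add: less_ceiling_iff)
    then show "k \<in> {..< nat (ceiling (sqrt n))}" by simp
  qed
  then have "card {k::nat. k*k < n} \<le> nat (ceiling (sqrt n))"
    by (metis card_lessThan card_mono finite_lessThan)
  then have "real (card {k::nat. k*k < n}) \<le> real (nat (ceiling (sqrt n)))" by (rule of_nat_mono)
  also have "\<dots> = of_int (ceiling (sqrt n))" by simp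
  also have "\<dots> \<le> sqrt n + 1" by (rule of_int_ceiling_le_add_one)
  finally show ?thesis .
qed

lemma fin_sq: "finite {k::nat. k*k < n}"
proof (rule finite_subset[of _ "{..<n}"])
  show "{k::nat. k*k < n} \<subseteq> {..<n}"
  proof
    fix k assume "k \<in> {k::nat. k*k < n}"
    then have a: "k*k < n" by simp
    have b: "k \<le> k*k" by (simp add: le_square)
    show "k \<in> {..<n}" using le_less_trans[OF b a] by simp
  qed
qed simp

lemma mod3: "(3*q+2) mod 3 = (2::nat)"
  by presburger

lemma xs_nsq_mod: "\<not> Psq t \<Longrightarrow> xs t mod 3 = 2"
  using xs_nsq mod3[of "t*t"] by (simp add: mult.assoc)

lemma inj_xs: "inj xs"
proof (rule injI)
  fix a b assume e: "xs a = xs b"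
  show "a = b"
  proof (cases "Psq a")
    case True
    then have pb: "Psq b" using e xs_mod xs_nsq_mod by metis
    obtain k where k: "a = k*k" using True Psq_def by auto
    obtain l where l: "b = l*l" using pb Psq_def by auto
    have "k = l" using e xs_sq[OF True k] xs_sq[OF pb l] by simp
    then show ?thesis using k l by simp
  next
    case False
    then have pb: "\<not> Psq b" using e xs_mod xs_nsq_mod by metis
    have "3*a*a+2 = 3*b*b+2" using e xs_nsq[OF False] xs_nsq[OF pb] by simp
    then have "a*a = b*b" by simp
    then show ?thesis by (rule sq_inj)
  qed
qed

lemma small_in_range: "m mod 3 \<noteq> 2 \<Longrightarrow> m \<in> range xs"
  using xs_sq2 by (metis rangeI)

lemma noise:
  assumes "\<And>t. xs t \<notin> L \<Longrightarrow> Psq t"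
  shows "(\<lambda>n. real (card {t. t < n \<and> xs t \<notin> L}) / real n) \<longlonglongrightarrow> 0"
proof (rule tendsto_sandwich[of "\<lambda>n. 0" _ _ "\<lambda>n. (sqrt n + 1) / real n"])
  show "\<forall>\<^sub>F n in sequentially. 0 \<le> real (card {t. t < n \<and> xs t \<notin> L}) / real n" by simp
  show "\<forall>\<^sub>F n in sequentially. real (card {t. t < n \<and> xs t \<notin> L}) / real n \<le> (sqrt n + 1) / real n"
  proof (rule always_eventually, rule allI)
    fix n
    have "{t. t < n \<and> xs t \<notin> L} \<subseteq> (\<lambda>k. k*k) ` {k. k*k < n}"
    proof
      fix t assume t: "t \<in> {t. t < n \<and> xs t \<notin> L}"
      then have "Psq t" using assms by auto
      then obtain k where "t = k*k" using Psq_def by auto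
      then show "t \<in> (\<lambda>k. k*k) ` {k. k*k < n}" using t by auto
    qed
    then have "card {t. t < n \<and> xs t \<notin> L} \<le> card ((\<lambda>k. k*k) ` {k. k*k < n})"
      by (intro card_mono finite_imageI fin_sq)
    also have "\<dots> \<le> card {k. k*k < n}" by (rule card_image_le[OF fin_sq])
    finally have "real (card {t. t < n \<and> xs t \<notin> L}) \<le> sqrt n + 1"
      using card_sq[of n] by linarith
    then show "real (card {t. t < n \<and> xs t \<notin> L}) / real n \<le> (sqrt n + 1) / real n"
      by (simp add: divide_right_mono)
  qed
  show "(\<lambda>n. 0) \<longlonglongrightarrow> (0::real)" by simp
  show "(\<lambda>n. (sqrt (real n) + 1) / real n) \<longlonglongrightarrow> 0" by real_asymp
qed

lemma noisy1: "noisy_enumeration xs LL1"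
  unfolding noisy_enumeration_def
proof (intro conjI)
  show "inj xs" by (rule inj_xs)
  show "LL1 \<subseteq> range xs" unfolding LL1_def CC_def using small_in_range by auto
  show "(\<lambda>n. real (card {t. t < n \<and> xs t \<notin> LL1}) / real n) \<longlonglongrightarrow> 0"
  proof (rule noise)
    fix t assume a: "xs t \<notin> LL1"
    show "Psq t"
    proof (rule ccontr)
      assume "\<not> Psq t"
      then have "xs t \<in> CC" unfolding CC_def using xs_nsq_mod by auto
      then show False using a unfolding LL1_def by auto
    qed
  qed
qed

lemma noisy2: "noisy_enumeration xs LL2"
  unfolding noisy_enumeration_def
proof (intro conjI)
  show "inj xs" by (rule inj_xs)
  show "LL2 \<subseteq> range xs" unfolding LL2_def CC_def using small_in_range by auto
  show "(\<lambda>n. real (card {t. t < n \<and> xs t \<notin> LL2}) / real n) \<longlonglongrightarrow> 0"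
  proof (rule noise)
    fix t assume a: "xs t \<notin> LL2"
    show "Psq t"
    proof (rule ccontr)
      assume "\<not> Psq t"
      then have "xs t \<in> CC" unfolding CC_def using xs_nsq_mod by auto
      then show False using a unfolding LL2_def by auto
    qed
  qed
qed

lemma enum_le:
  assumes "infinite K" "strict_mono g" "range g \<subseteq> K"
  shows "enumerate K n \<le> g n"
proof (induction n)
  case 0
  have "g 0 \<in> K" using assms by auto
  then show ?case by (simp add: enumerate.simps(1) Least_le)
next
  case (Suc n)
  have "g (Suc n) \<in> K" using assms by auto
  moreover have "enumerate K n < g (Suc n)"
    using Suc assms(2) by (meson le_less_trans lessI strict_mono_def)
  ultimately show ?case unfolding enumerate_Suc''[OF assms(1)] by (simp add: Least_le)
qed

lemma inf1: "infinite LL1"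
proof -
  have "range (\<lambda>i::nat. 3*i) \<subseteq> LL1" unfolding LL1_def by auto
  moreover have "infinite (range (\<lambda>i::nat. 3*i))"
    by (rule range_inj_infinite) (auto simp: inj_def)
  ultimately show ?thesis using finite_subset by blast
qed

lemma inf2: "infinite LL2"
proof -
  have "range (\<lambda>i::nat. 3*i+1) \<subseteq> LL2" unfolding LL2_def by auto
  moreover have "infinite (range (\<lambda>i::nat. 3*i+1))"
    by (rule range_inj_infinite) (auto simp: inj_def)
  ultimately show ?thesis using finite_subset by blast
qed

lemma CC_small: "CC \<inter> {..<3*n} \<subseteq> (\<lambda>t. 3*t*t+2) ` {t. t*t < n}"
proof
  fix m assume m: "m \<in> CC \<inter> {..<3*n}"
  then obtain t where t: "m = xs t" "m mod 3 = 2" unfolding CC_def by auto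
  then have "\<not> Psq t" using xs_mod by metis
  then have "m = 3*t*t+2" using t xs_nsq by simp
  then show "m \<in> (\<lambda>t. 3*t*t+2) ` {t. t*t < n}" using m by auto
qed

lemma density0:
  assumes "S \<subseteq> F \<union> CC" "finite F"
  shows "upper_density S LL1 \<le> 0"
proof -
  define u where "u n = (real (card F) + sqrt n + 1) / real n" for n :: nat
  have bound: "ereal (real (card (S \<inter> enumerate LL1 ` {..<n})) / real n) \<le> ereal (u n)" for n
  proof -
    have "enumerate LL1 ` {..<n} \<subseteq> {..<3*n}"
    proof
      fix y assume "y \<in> enumerate LL1 ` {..<n}"
      then obtain i where i: "i < n" "y = enumerate LL1 i" by auto
      have "enumerate LL1 i < enumerate LL1 n" using i inf1 by simp
      moreover have "enumerate LL1 n \<le> 3*n"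
      proof -
        have r: "range (\<lambda>i::nat. 3*i) \<subseteq> LL1" unfolding LL1_def by auto
        have sm: "strict_mono (\<lambda>i::nat. 3*i)" by (auto simp: strict_mono_def)
        show ?thesis using enum_le[OF inf1 sm r] .
      qed
      ultimately show "y \<in> {..<3*n}" using i by auto
    qed
    then have sub: "S \<inter> enumerate LL1 ` {..<n} \<subseteq> F \<union> (\<lambda>t. 3*t*t+2) ` {t. t*t < n}"
      using assms(1) CC_small by blast
    have "card (S \<inter> enumerate LL1 ` {..<n}) \<le> card (F \<union> (\<lambda>t. 3*t*t+2) ` {t. t*t < n})"
      by (rule card_mono[OF _ sub]) (simp add: assms(2) fin_sq)
    also have "\<dots> \<le> card F + card ((\<lambda>t. 3*t*t+2) ` {t. t*t < n})" by (rule card_Un_le)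
    also have "\<dots> \<le> card F + card {t. t*t < n}" using card_image_le[OF fin_sq] by simp
    finally have "real (card (S \<inter> enumerate LL1 ` {..<n})) \<le> real (card F) + sqrt n + 1"
      using card_sq[of n] by linarith
    then have "real (card (S \<inter> enumerate LL1 ` {..<n})) / real n \<le> u n"
      unfolding u_def by (simp add: divide_right_mono)
    then show ?thesis by simp
  qed
  have "upper_density S LL1 \<le> limsup (\<lambda>n. ereal (u n))"
    unfolding upper_density_def by (rule Limsup_mono, rule always_eventually) (simp add: bound del: ereal_less_eq)
  also have "u \<longlonglongrightarrow> 0" unfolding u_def by real_asymp
  then have "limsup (\<lambda>n. ereal (u n)) = 0"
    by (intro lim_imp_Limsup) (auto simp: zero_ereal_def intro: tendsto_ereal)
  finally show ?thesis .
qed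

theorem theorem6p20:
  shows "\<exists>L1 L2 (x :: nat \<Rightarrow> nat).
     is_language L1 \<and> is_language L2 \<and>
     (\<forall>K\<in>{L1, L2}. noisy_enumeration x K) \<and>
     (\<forall>\<rho>::real. \<rho> > 0 \<longrightarrow>
        \<not> (\<exists>G. valid_generator G x \<and>
               (\<forall>K\<in>{L1, L2}. generates_in_limit G x K \<and> achieves_upper_density G x K \<rho>)))"
proof (intro exI conjI allI impI)
  show "is_language LL1" unfolding is_language_def by (rule inf1)
  show "is_language LL2" unfolding is_language_def by (rule inf2)
  show "\<forall>K\<in>{LL1, LL2}. noisy_enumeration xs K" using noisy1 noisy2 by auto
  fix \<rho> :: real assume rho: "\<rho> > 0"
  show "\<not> (\<exists>G. valid_generator G xs \<and>
               (\<forall>K\<in>{LL1, LL2}. generates_in_limit G xs K \<and> achieves_upper_density G xs K \<rho>))"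
  proof
    assume "\<exists>G. valid_generator G xs \<and>
               (\<forall>K\<in>{LL1, LL2}. generates_in_limit G xs K \<and> achieves_upper_density G xs K \<rho>)"
    then obtain G where g1: "generates_in_limit G xs LL1" and g2: "generates_in_limit G xs LL2"
      and d: "achieves_upper_density G xs LL1 \<rho>" by auto
    have "\<forall>\<^sub>F n in sequentially. gen_output G xs n \<in> LL1 \<and> gen_output G xs n \<in> LL2"
      using g1 g2 unfolding generates_in_limit_def by (rule eventually_conj)
    then obtain N where N: "\<And>n. n \<ge> N \<Longrightarrow> gen_output G xs n \<in> LL1 \<and> gen_output G xs n \<in> LL2"
      unfolding eventually_sequentially by blast
    have sub: "range (gen_output G xs) \<subseteq> gen_output G xs ` {..<N} \<union> CC"
    proof
      fix y assume "y \<in> range (gen_output G xs)"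
      then obtain n where y: "y = gen_output G xs n" by auto
      show "y \<in> gen_output G xs ` {..<N} \<union> CC"
      proof (cases "n < N")
        case True then show ?thesis using y by auto
      next
        case False
        then have "y \<in> LL1 \<and> y \<in> LL2" using N y by auto
        then show ?thesis unfolding LL1_def LL2_def by auto
      qed
    qed
    have "upper_density (range (gen_output G xs)) LL1 \<le> 0"
      by (rule density0[OF sub]) simp
    moreover have "ereal \<rho> \<le> upper_density (range (gen_output G xs)) LL1"
      using d unfolding achieves_upper_density_def .
    ultimately show False using rho by (metis ereal_less_eq(3) less_le_trans not_le order_trans zero_ereal_def)
  qed
qed

end
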